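(* Let $\mathbb{K}$ be a finite reduced formal context. Then $\mathcal{CDB}(BC(\mathbb{K}))=\{A\to A^{\bullet}\mid A\to A^{\bullet}\in\mathcal{CDB}(\mathbb{K})\text{ and }|A|=1\}$, i.e. the canonical direct basis of the Birkhoff completion of $\mathbb{K}$ consists exactly of the implications of the canonical direct basis of $\mathbb{K}$ whose premise is a singleton.
   Context: For a formal context $(G,M,I)$, derivation: $A'=\{m\in M\mid\forall g\in A:(g,m)\in I\}$, $B'=\{g\in G\mid\forall m\in B:(g,m)\in I\}$. A context is reduced if no object $g$ has $\{g\}'=X'$ for some $X\subseteq G$ with $g\notin X$, and no attribute $m$ has $\{m\}'=X'$ for some $X\subseteq M$ with $m\notin X$. For $A\subseteq M$, $A^{\bullet}:=A''\setminus\big(A\cup\bigcup_{n\in A}(A\setminus\{n\})''\big)$; $A$ is a proper premise if $A^{\bullet}\ne\emptyset$. The canonical direct basis $\mathcal{CDB}(\mathbb{K})$ is the set of implications $A\to A^{\bullet}$ for all proper premises $A$ of $\mathbb{K}$ (with $A^\bullet$ computed in that context). For $m,n\in M$, $m\ge_{\mathbb{K}}n$ iff $\{m\}'\supseteq\{n\}'$. Let $\mathcal{M}(M)$ be the set of attributes whose attribute concept $(\{m\}',\{m\}'')$ is meet-irreducible in the concept lattice, and $\overline{\mathcal{M}(M)}=\{\overline m\mid m\in\mathcal{M}(M)\}$ new elements. The Birkhoff completion is $BC(\mathbb{K}):=\big(G\cup\overline{\mathcal{M}(M)},M,I\cup\{(\overline m,n)\in\overline{\mathcal{M}(M)}\times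 M\mid m\not\ge_{\mathbb{K}}n\}\big)$. *)

theory Defs
  imports Main
begin

type_synonym ('g, 'm) fcontext = "'g set \<times> 'm set \<times> ('g \<times> 'm) set"

definition objs :: "('g, 'm) fcontext \<Rightarrow> 'g set" where "objs K = fst K"
definition atts :: "('g, 'm) fcontext \<Rightarrow> 'm set" where "atts K = fst (snd K)"
definition inc :: "('g, 'm) fcontext \<Rightarrow> ('g \<times> 'm) set" where "inc K = snd (snd K)"

definition is_context :: "('g, 'm) fcontext \<Rightarrow> bool" where
  "is_context K \<longleftrightarrow> inc K \<subseteq> objs K \<times> atts K"

definition intent :: "('g, 'm) fcontext \<Rightarrow> 'g set \<Rightarrow> 'm set" where
  "intent K A = {m \<in> atts K. \<forall>g\<in>A. (g, m) \<in> inc K}"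

definition extent :: "('g, 'm) fcontext \<Rightarrow> 'm set \<Rightarrow> 'g set" where
  "extent K B = {g \<in> objs K. \<forall>m\<in>B. (g, m) \<in> inc K}"

definition aclosure :: "('g, 'm) fcontext \<Rightarrow> 'm set \<Rightarrow> 'm set" where
  "aclosure K B = intent K (extent K B)"

definition reduced :: "('g, 'm) fcontext \<Rightarrow> bool" where
  "reduced K \<longleftrightarrow>
     \<not> (\<exists>g\<in>objs K. \<exists>X. X \<subseteq> objs K \<and> g \<notin> X \<and> intent K {g} = intent K X) \<and>
     \<not> (\<exists>m\<in>atts K. \<exists>X. X \<subseteq> atts K \<and> m \<notin> X \<and> extent K {m} = extent K X)"

definition bullet :: "('g, 'm) fcontext \<Rightarrow> 'm set \<Rightarrow> 'm set" where
  "bullet K A = aclosure K A - (A \<union> (\<Union>n\<in>A. aclosure K (A - {n})))"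

definition proper_premise :: "('g, 'm) fcontext \<Rightarrow> 'm set \<Rightarrow> bool" where
  "proper_premise K A \<longleftrightarrow> A \<subseteq> atts K \<and> bullet K A \<noteq> {}"

definition CDB :: "('g, 'm) fcontext \<Rightarrow> ('m set \<times> 'm set) set" where
  "CDB K = {(A, bullet K A) | A. proper_premise K A}"

definition att_ge :: "('g, 'm) fcontext \<Rightarrow> 'm \<Rightarrow> 'm \<Rightarrow> bool" where
  "att_ge K m n \<longleftrightarrow> extent K {m} \<supseteq> extent K {n}"

definition concepts :: "('g, 'm) fcontext \<Rightarrow> ('g set \<times> 'm set) set" where
  "concepts K = {(A, B). A \<subseteq> objs K \<and> B \<subseteq> atts K \<and> intent K A = B \<and> extent K B = A}"

definition concept_le :: "('g set \<times> 'm set) \<Rightarrow> ('g set \<times> 'm set) \<Rightarrow> bool" where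
  "concept_le x y \<longleftrightarrow> fst x \<subseteq> fst y"

definition is_meet :: "('g, 'm) fcontext \<Rightarrow> ('g set \<times> 'm set) \<Rightarrow> ('g set \<times> 'm set) \<Rightarrow> ('g set \<times> 'm set) \<Rightarrow> bool" where
  "is_meet K x y z \<longleftrightarrow> x \<in> concepts K \<and> concept_le x y \<and> concept_le x z \<and>
     (\<forall>w\<in>concepts K. concept_le w y \<and> concept_le w z \<longrightarrow> concept_le w x)"

definition meet_irreducible :: "('g, 'm) fcontext \<Rightarrow> ('g set \<times> 'm set) \<Rightarrow> bool" where
  "meet_irreducible K x \<longleftrightarrow> x \<in> concepts K \<and> (\<exists>y\<in>concepts K. \<not> concept_le y x) \<and>
     (\<forall>y\<in>concepts K. \<forall>z\<in>concepts K. is_meet K x y z \<longrightarrow> x = y \<or> x = z)"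

definition attr_concept :: "('g, 'm) fcontext \<Rightarrow> 'm \<Rightarrow> 'g set \<times> 'm set" where
  "attr_concept K m = (extent K {m}, aclosure K {m})"

definition MI :: "('g, 'm) fcontext \<Rightarrow> 'm set" where
  "MI K = {m \<in> atts K. meet_irreducible K (attr_concept K m)}"

text \<open>Birkhoff completion: new objects \<open>m\<close>-bar are encoded as \<open>Inr m\<close>, old objects as \<open>Inl g\<close>.\<close>
definition BC :: "('g, 'm) fcontext \<Rightarrow> ('g + 'm, 'm) fcontext" where
  "BC K = (Inl ` objs K \<union> Inr ` MI K, atts K,
           {(Inl g, m) | g m. (g, m) \<in> inc K} \<union>
           {(Inr m, n) | m n. m \<in> MI K \<and> n \<in> atts K \<and> \<not> att_ge K m n})"

end

theory Submission
  imports Defs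
begin

lemma objs_BC: "objs (BC K) = Inl ` objs K \<union> Inr ` MI K" by (simp add: BC_def objs_def)
lemma atts_BC: "atts (BC K) = atts K" by (simp add: BC_def atts_def)
lemma inc_BC_l: "((Inl g, m) \<in> inc (BC K)) = ((g, m) \<in> inc K)" by (auto simp: BC_def inc_def)
lemma inc_BC_r: "((Inr m, n) \<in> inc (BC K)) = (m \<in> MI K \<and> n \<in> atts K \<and> \<not> att_ge K m n)"
  by (auto simp: BC_def inc_def)

lemma ext_int_ext: "B \<subseteq> atts K \<Longrightarrow> extent K (intent K (extent K B)) = extent K B"
  by (auto simp: extent_def intent_def)

lemma concept_eq: "x \<in> concepts K \<Longrightarrow> y \<in> concepts K \<Longrightarrow> fst x = fst y \<Longrightarrow> x = y"
  by (auto simp: concepts_def)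

lemma MI_eq:
  assumes red: "reduced K" shows "MI K = atts K"
proof
  show "MI K \<subseteq> atts K" by (auto simp: MI_def)
  show "atts K \<subseteq> MI K"
  proof
    fix m assume m: "m \<in> atts K"
    let ?x = "attr_concept K m"
    have xc: "?x \<in> concepts K" using m ext_int_ext[of "{m}" K]
      by (auto simp: concepts_def attr_concept_def aclosure_def extent_def intent_def)
    have topc: "(objs K, intent K (objs K)) \<in> concepts K"
      by (auto simp: concepts_def extent_def intent_def)
    have ntop: "\<not> concept_le (objs K, intent K (objs K)) ?x"
    proof
      assume "concept_le (objs K, intent K (objs K)) ?x"
      then have "extent K {m} = extent K {}"
        by (auto simp: concept_le_def attr_concept_def extent_def)
      then show False using red m unfolding reduced_def by blast
    qed
    have irr: "\<forall>y\<in>concepts K. \<forall>z\<in>concepts K. is_meet K ?x y z \<longrightarrow> ?x = y \<or> ?x = z"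
    proof (intro ballI impI, rule ccontr)
      fix y z assume yc: "y \<in> concepts K" and zc: "z \<in> concepts K" and meet: "is_meet K ?x y z"
        and ne: "\<not> (?x = y \<or> ?x = z)"
      have xy: "fst ?x \<subseteq> fst y" and xz: "fst ?x \<subseteq> fst z"
        and glb: "\<forall>w\<in>concepts K. concept_le w y \<and> concept_le w z \<longrightarrow> concept_le w ?x"
        using meet by (auto simp: is_meet_def concept_le_def)
      define B where "B = snd y \<union> snd z"
      have Batts: "B \<subseteq> atts K" using yc zc by (auto simp: B_def concepts_def)
      have fy: "fst y = extent K (snd y)" using yc by (auto simp: concepts_def)
      have fz: "fst z = extent K (snd z)" using zc by (auto simp: concepts_def)
      have ext: "extent K B = fst y \<inter> fst z" using fy fz by (auto simp: B_def extent_def)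
      let ?w = "(extent K B, intent K (extent K B))"
      have wc: "?w \<in> concepts K" using ext_int_ext[OF Batts]
        by (auto simp: concepts_def extent_def intent_def)
      have "concept_le ?w y" "concept_le ?w z" using ext by (auto simp: concept_le_def)
      then have "concept_le ?w ?x" using glb wc by blast
      then have e1: "extent K B \<subseteq> extent K {m}" by (simp add: concept_le_def attr_concept_def)
      have "extent K {m} \<subseteq> extent K B" using xy xz ext by (auto simp: attr_concept_def)
      with e1 have eq: "extent K {m} = extent K B" by blast
      have my: "m \<notin> snd y"
      proof
        assume "m \<in> snd y"
        then have "fst y \<subseteq> extent K {m}" using fy by (auto simp: extent_def)
        then have "fst ?x = fst y" using xy by (auto simp: attr_concept_def)
        then show False using concept_eq[OF xc yc] ne by blast
      qed
      have mz: "m \<notin> snd z"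
      proof
        assume "m \<in> snd z"
        then have "fst z \<subseteq> extent K {m}" using fz by (auto simp: extent_def)
        then have "fst ?x = fst z" using xz by (auto simp: attr_concept_def)
        then show False using concept_eq[OF xc zc] ne by blast
      qed
      have "m \<notin> B" using my mz by (simp add: B_def)
      then show False using red m Batts eq unfolding reduced_def by blast
    qed
    show "m \<in> MI K" unfolding MI_def meet_irreducible_def
      using m xc topc ntop irr by blast
  qed
qed

lemma att_ge_refl: "att_ge K n n" by (simp add: att_ge_def)
lemma att_ge_trans: "att_ge K m n \<Longrightarrow> att_ge K n b \<Longrightarrow> att_ge K m b" by (auto simp: att_ge_def)

lemma cl_BC:
  assumes red: "reduced K" and B: "B \<subseteq> atts K"
  shows "aclosure (BC K) B = {n \<in> atts K. \<exists>b\<in>B. att_ge K n b}"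
proof (intro set_eqI iffI)
  fix n assume n: "n \<in> aclosure (BC K) B"
  then have na: "n \<in> atts K" and all: "\<forall>x\<in>extent (BC K) B. (x, n) \<in> inc (BC K)"
    by (auto simp: aclosure_def intent_def atts_BC)
  show "n \<in> {n \<in> atts K. \<exists>b\<in>B. att_ge K n b}"
  proof (rule ccontr)
    assume nb: "n \<notin> {n \<in> atts K. \<exists>b\<in>B. att_ge K n b}"
    have "Inr n \<in> extent (BC K) B"
      using nb na B MI_eq[OF red] by (auto simp: extent_def objs_BC inc_BC_r)
    then have "(Inr n, n) \<in> inc (BC K)" using all by blast
    then show False by (simp add: inc_BC_r att_ge_refl)
  qed
next
  fix n assume "n \<in> {n \<in> atts K. \<exists>b\<in>B. att_ge K n b}"
  then obtain b where na: "n \<in> atts K" and b: "b \<in> B" and ge: "att_ge K n b" by blast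
  have "\<forall>x\<in>extent (BC K) B. (x, n) \<in> inc (BC K)"
  proof
    fix x assume x: "x \<in> extent (BC K) B"
    show "(x, n) \<in> inc (BC K)"
    proof (cases x)
      case (Inl g)
      then have "g \<in> objs K" "(g, b) \<in> inc K" using x b
        by (auto simp: extent_def objs_BC inc_BC_l)
      then have "g \<in> extent K {b}" by (simp add: extent_def)
      then have "g \<in> extent K {n}" using ge by (auto simp: att_ge_def)
      then show ?thesis using Inl by (simp add: inc_BC_l extent_def)
    next
      case (Inr m)
      then have "m \<in> MI K" "\<not> att_ge K m b" using x b
        by (auto simp: extent_def objs_BC inc_BC_r)
      then show ?thesis using Inr na ge att_ge_trans by (metis inc_BC_r)
    qed
  qed
  then show "n \<in> aclosure (BC K) B" using na by (simp add: aclosure_def intent_def atts_BC)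
qed

lemma cl_K1: "a \<in> atts K \<Longrightarrow> aclosure K {a} = {n \<in> atts K. att_ge K n a}"
  by (auto simp: aclosure_def intent_def extent_def att_ge_def)

lemma cl_K0: "reduced K \<Longrightarrow> aclosure K {} = {}"
proof -
  assume red: "reduced K"
  { fix n assume "n \<in> aclosure K {}"
    then have "n \<in> atts K" "extent K {n} = extent K {}"
      by (auto simp: aclosure_def intent_def extent_def)
    then have False using red unfolding reduced_def by blast }
  then show ?thesis by blast
qed

lemma bullet_single:
  assumes red: "reduced K" and a: "a \<in> atts K"
  shows "bullet (BC K) {a} = bullet K {a}"
proof -
  have "bullet (BC K) {a} = aclosure (BC K) {a} - ({a} \<union> aclosure (BC K) {})"
    by (simp add: bullet_def)
  also have "\<dots> = aclosure K {a} - ({a} \<union> aclosure K {})"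
    using cl_BC[OF red, of "{a}"] cl_BC[OF red, of "{}"] cl_K1[OF a] cl_K0[OF red] a by simp
  also have "\<dots> = bullet K {a}" by (simp add: bullet_def)
  finally show ?thesis .
qed

lemma bullet_BC_nonsingle:
  assumes red: "reduced K" and A: "A \<subseteq> atts K" and ne: "bullet (BC K) A \<noteq> {}"
  shows "\<exists>a. A = {a}"
proof (rule ccontr)
  assume ns: "\<not> (\<exists>a. A = {a})"
  obtain x where x: "x \<in> bullet (BC K) A" using ne by blast
  then have xc: "x \<in> aclosure (BC K) A" and xn: "x \<notin> (\<Union>n\<in>A. aclosure (BC K) (A - {n}))"
    by (auto simp: bullet_def)
  from xc obtain c where xa: "x \<in> atts K" and c: "c \<in> A" and ge: "att_ge K x c"
    using cl_BC[OF red A] by auto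
  obtain d where d: "d \<in> A" "d \<noteq> c" using ns c by blast
  have "A - {d} \<subseteq> atts K" using A by blast
  then have "x \<in> aclosure (BC K) (A - {d})" using cl_BC[OF red] xa c d ge by auto
  then show False using xn d by blast
qed

theorem mainTheorem8:
  fixes K :: "('g, 'm) fcontext"
  assumes "is_context K" and "finite (objs K)" and "finite (atts K)" and "reduced K"
  shows "CDB (BC K) = {(A, B). (A, B) \<in> CDB K \<and> card A = 1}"
proof (intro set_eqI iffI)
  fix p assume "p \<in> CDB (BC K)"
  then obtain A where p: "p = (A, bullet (BC K) A)" and A: "A \<subseteq> atts K"
      and ne: "bullet (BC K) A \<noteq> {}"
    by (auto simp: CDB_def proper_premise_def atts_BC)
  obtain a where a: "A = {a}" using bullet_BC_nonsingle[OF assms(4) A ne] by blast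
  have aa: "a \<in> atts K" using A a by blast
  show "p \<in> {(A, B). (A, B) \<in> CDB K \<and> card A = 1}"
    using p a ne bullet_single[OF assms(4) aa] aa
    by (auto simp: CDB_def proper_premise_def)
next
  fix p assume "p \<in> {(A, B). (A, B) \<in> CDB K \<and> card A = 1}"
  then obtain A where p: "p = (A, bullet K A)" and A: "A \<subseteq> atts K"
      and ne: "bullet K A \<noteq> {}" and c: "card A = 1"
    by (auto simp: CDB_def proper_premise_def)
  obtain a where a: "A = {a}" using c card_1_singletonE by blast
  have aa: "a \<in> atts K" using A a by blast
  show "p \<in> CDB (BC K)"
    using p a ne bullet_single[OF assms(4) aa] aa
    by (auto simp: CDB_def proper_premise_def atts_BC)
qed

end
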